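(* Let $G$ be a non-trivial abelian group (written additively) and $\varphi$ an automorphism of $G$. Let $G_\varphi$ be the set $G$ with the operation $g\rhd h=\varphi(g)+(\mathrm{id}-\varphi)(h)$. Then the following are equivalent: (i) $G_\varphi$ is finitely stable; (ii) $\varphi$ is a torsion element of the automorphism group $Aut(G)$.
   Context: For a rack $X$ and $u_1,\ldots,u_n\in X$, write $x\rhd(u_i)_{i=1}^n:=(\cdots((x\rhd u_1)\rhd u_2)\cdots)\rhd u_n$. A stabilizing family of order $n$ is a family $(u_1,\ldots,u_n)$ of elements of $X$ with $x\rhd(u_i)_{i=1}^n=x$ for all $x\in X$; $X$ is finitely stable if it has a stabilizing family of some order $n\ge 1$. *)

theory Defs
  imports Main
begin

definition rack_iter :: "('a \<Rightarrow> 'a \<Rightarrow> 'a) \<Rightarrow> 'a \<Rightarrow> 'a list \<Rightarrow> 'a" where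
  "rack_iter op x us = foldl op x us"

definition stabilizing_family :: "'a set \<Rightarrow> ('a \<Rightarrow> 'a \<Rightarrow> 'a) \<Rightarrow> 'a list \<Rightarrow> bool" where
  "stabilizing_family X op us \<longleftrightarrow> set us \<subseteq> X \<and> (\<forall>x\<in>X. rack_iter op x us = x)"

definition finitely_stable :: "'a set \<Rightarrow> ('a \<Rightarrow> 'a \<Rightarrow> 'a) \<Rightarrow> bool" where
  "finitely_stable X op \<longleftrightarrow> (\<exists>us. length us \<ge> 1 \<and> stabilizing_family X op us)"

definition group_automorphism :: "('a::ab_group_add \<Rightarrow> 'a) \<Rightarrow> bool" where
  "group_automorphism \<phi> \<longleftrightarrow> bij \<phi> \<and> (\<forall>x y. \<phi> (x + y) = \<phi> x + \<phi> y)"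

definition alex_op :: "('a::ab_group_add \<Rightarrow> 'a) \<Rightarrow> 'a \<Rightarrow> 'a \<Rightarrow> 'a" where
  "alex_op \<phi> g h = \<phi> g + (h - \<phi> h)"

definition torsion_automorphism :: "('a::ab_group_add \<Rightarrow> 'a) \<Rightarrow> bool" where
  "torsion_automorphism \<phi> \<longleftrightarrow> (\<exists>n::nat. n \<ge> 1 \<and> (\<phi> ^^ n) = id)"

end

theory Submission
  imports Defs
begin

lemma iter_formula:
  fixes \<phi> :: "'a::ab_group_add \<Rightarrow> 'a"
  assumes add: "\<And>x y. \<phi> (x + y) = \<phi> x + \<phi> y"
  shows "rack_iter (alex_op \<phi>) x us = (\<phi> ^^ length us) x + rack_iter (alex_op \<phi>) 0 us"
proof (induction us rule: rev_induct)
  case Nil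
  then show ?case by (simp add: rack_iter_def)
next
  case (snoc u us)
  then show ?case by (simp add: rack_iter_def alex_op_def add algebra_simps)
qed

lemma rep_zero:
  fixes \<phi> :: "'a::ab_group_add \<Rightarrow> 'a"
  shows "rack_iter (alex_op \<phi>) 0 (replicate n 0) = 0"
  by (induction n) (simp_all add: rack_iter_def alex_op_def)

theorem mainTheorem6:
  fixes \<phi> :: "'a::ab_group_add \<Rightarrow> 'a"
  assumes "\<exists>g::'a. g \<noteq> 0"
    and "group_automorphism \<phi>"
  shows "finitely_stable UNIV (alex_op \<phi>) \<longleftrightarrow> torsion_automorphism \<phi>"
proof -
  have add: "\<And>x y. \<phi> (x + y) = \<phi> x + \<phi> y" using assms(2) by (simp add: group_automorphism_def)
  have p0: "\<phi> 0 = 0" using add[of 0 0] by simp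
  have f0: "\<And>n. (\<phi> ^^ n) 0 = 0" proof -
    fix n show "(\<phi> ^^ n) 0 = 0" by (induction n) (simp_all add: p0)
  qed
  show ?thesis
  proof
    assume "finitely_stable UNIV (alex_op \<phi>)"
    then obtain us where l: "length us \<ge> 1" and st: "\<forall>x. rack_iter (alex_op \<phi>) x us = x"
      by (auto simp: finitely_stable_def stabilizing_family_def)
    have c: "rack_iter (alex_op \<phi>) 0 us = 0" using st by simp
    have "(\<phi> ^^ length us) = id"
    proof
      fix x show "(\<phi> ^^ length us) x = id x"
        using st iter_formula[OF add, of x us] c by simp
    qed
    then show "torsion_automorphism \<phi>" using l unfolding torsion_automorphism_def by blast
  next
    assume "torsion_automorphism \<phi>"
    then obtain n where n: "n \<ge> 1" "\<phi> ^^ n = id" unfolding torsion_automorphism_def by blast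
    have "\<forall>x. rack_iter (alex_op \<phi>) x (replicate n 0) = x"
      using iter_formula[OF add, of _ "replicate n 0"] rep_zero[of \<phi> n] n(2) by simp
    then show "finitely_stable UNIV (alex_op \<phi>)" using n(1)
      unfolding finitely_stable_def stabilizing_family_def
      by (intro exI[of _ "replicate n 0"]) simp
  qed
qed

end
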